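(* Let $N\ge2$, $x_1>x_2>\cdots>x_N$ be real, $\rho=\sum_{j=1}^N\rho_j\delta_{x_j}$ with $\rho_j>0$, $\sum\rho_j=1$, and $\rho_t=e^{2tx}d\rho(x)/\int e^{2tx}d\rho(x)$. For $1\le j\le N$ let $x_1^{(j)}(t)>\cdots>x_j^{(j)}(t)$ be the zeros of the monic orthogonal polynomial $P_j(x;\rho_t)$. Then for each $j=1,\dots,N-1$ and $k=1,\dots,j$ there is a constant $C$ such that for all $t\ge0$, \[ |x_k^{(j)}(t)-x_k|\le C\,e^{-2t(x_k-x_{j+1})}. \]
   Context: $P_j(x;\rho_t)$ is the unique monic polynomial of degree $j$ orthogonal in $L^2(\rho_t)$ to all polynomials of degree less than $j$. *)

theory Defs
  imports "HOL-Computational_Algebra.Polynomial"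
begin

text \<open>Atoms x 1 > ... > x N with weights rho 1, ..., rho N (1-based indexing).\<close>

definition tilt_weight :: "nat \<Rightarrow> (nat \<Rightarrow> real) \<Rightarrow> (nat \<Rightarrow> real) \<Rightarrow> real \<Rightarrow> nat \<Rightarrow> real" where
  "tilt_weight N x rho t i =
     rho i * exp (2 * t * x i) / (\<Sum>l=1..N. rho l * exp (2 * t * x l))"

definition disc_ip :: "nat \<Rightarrow> (nat \<Rightarrow> real) \<Rightarrow> (nat \<Rightarrow> real) \<Rightarrow> real poly \<Rightarrow> real poly \<Rightarrow> real" where
  "disc_ip N x w p q = (\<Sum>i=1..N. w i * poly p (x i) * poly q (x i))"

definition monic_OP :: "nat \<Rightarrow> (nat \<Rightarrow> real) \<Rightarrow> (nat \<Rightarrow> real) \<Rightarrow> nat \<Rightarrow> real poly" where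
  "monic_OP N x w j = (THE p. degree p = j \<and> lead_coeff p = 1 \<and>
      (\<forall>q. degree q < j \<longrightarrow> disc_ip N x w p q = 0))"

definition OP_zero :: "nat \<Rightarrow> (nat \<Rightarrow> real) \<Rightarrow> (nat \<Rightarrow> real) \<Rightarrow> nat \<Rightarrow> nat \<Rightarrow> real" where
  "OP_zero N x w j k =
     rev (sorted_list_of_set {r. poly (monic_OP N x w j) r = 0}) ! (k - 1)"

end

theory Submission
  imports Defs
begin

lemma ip_sym: "disc_ip N x w p q = disc_ip N x w q p"
  unfolding disc_ip_def by (simp add: mult_ac)

lemma ip_add2: "disc_ip N x w p (q + r) = disc_ip N x w p q + disc_ip N x w p r"
  unfolding disc_ip_def by (simp add: algebra_simps sum.distrib)

lemma ip_diff2: "disc_ip N x w p (q - r) = disc_ip N x w p q - disc_ip N x w p r"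
  unfolding disc_ip_def by (simp add: algebra_simps sum_subtractf)

lemma ip_smult2: "disc_ip N x w p (smult c q) = c * disc_ip N x w p q"
  unfolding disc_ip_def by (simp add: algebra_simps sum_distrib_left)

lemma ip_sum2: "disc_ip N x w p (\<Sum>m\<in>A. f m) = (\<Sum>m\<in>A. disc_ip N x w p (f m))"
  unfolding disc_ip_def by (simp add: poly_sum sum_distrib_left sum_distrib_right algebra_simps sum.swap[of _ A])

lemma ip_scale: "disc_ip N x (\<lambda>i. c * w i) p q = c * disc_ip N x w p q"
  unfolding disc_ip_def by (simp add: algebra_simps sum_distrib_left)

lemma ip_self_nonneg:
  assumes "\<And>i. 1 \<le> i \<Longrightarrow> i \<le> N \<Longrightarrow> w i > 0"
  shows "disc_ip N x w q q \<ge> 0"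
  unfolding disc_ip_def using assms by (intro sum_nonneg) (simp add: mult.assoc less_imp_le)

lemma ip_self_pos:
  assumes "\<And>i. 1 \<le> i \<Longrightarrow> i \<le> N \<Longrightarrow> w i > 0" and "inj_on x {1..N}"
    and "degree q < N" and "q \<noteq> 0"
  shows "disc_ip N x w q q > 0"
proof (rule ccontr)
  assume "\<not> ?thesis"
  with ip_self_nonneg[of N w x q, OF assms(1)] have z: "disc_ip N x w q q = 0" by linarith
  have nn: "\<forall>i\<in>{1..N}. 0 \<le> w i * poly q (x i) * poly q (x i)"
  proof
    fix i assume "i \<in> {1..N}"
    then have "w i \<ge> 0" using assms(1) by (simp add: less_imp_le)
    then show "0 \<le> w i * poly q (x i) * poly q (x i)"
      by (simp add: mult.assoc)
  qed
  have "\<forall>i\<in>{1..N}. w i * poly q (x i) * poly q (x i) = 0"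
    using sum_nonneg_eq_0_iff[of "{1..N}" "\<lambda>i. w i * poly q (x i) * poly q (x i)"] nn z
    unfolding disc_ip_def by simp
  hence "\<forall>i\<in>{1..N}. poly q (x i) = 0" using assms(1) by force
  hence "x ` {1..N} \<subseteq> {r. poly q r = 0}" by auto
  hence "card (x ` {1..N}) \<le> card {r. poly q r = 0}"
    by (intro card_mono poly_roots_finite assms(4))
  also have "\<dots> \<le> degree q" by (rule card_poly_roots_bound[OF assms(4)])
  finally show False using assms(3) card_image[OF assms(2)] by simp
qed

definition isOP :: "nat \<Rightarrow> (nat \<Rightarrow> real) \<Rightarrow> (nat \<Rightarrow> real) \<Rightarrow> nat \<Rightarrow> real poly \<Rightarrow> bool" where
  "isOP N x w j p \<longleftrightarrow> degree p = j \<and> lead_coeff p = 1 \<and>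
      (\<forall>q. degree q < j \<longrightarrow> disc_ip N x w p q = 0)"

lemma OP_exists:
  assumes wpos: "\<And>i. 1 \<le> i \<Longrightarrow> i \<le> N \<Longrightarrow> w i > 0" and inj: "inj_on x {1..N}"
  shows "n < N \<Longrightarrow> \<exists>p. isOP N x w n p"
proof (induction n rule: less_induct)
  case (less n)
  define P where "P m = (SOME p. isOP N x w m p)" for m
  have PP: "isOP N x w m (P m)" if "m < n" for m
    unfolding P_def using less.IH[of m] that less.prems by (metis (mono_tags) someI_ex order.strict_trans)
  have Pdeg: "degree (P m) = m" and Plc: "lead_coeff (P m) = 1"
    and Port: "\<And>q. degree q < m \<Longrightarrow> disc_ip N x w (P m) q = 0" if "m < n" for m
    using PP[OF that] unfolding isOP_def by auto
  have Pnz: "P m \<noteq> 0" if "m < n" for m using Plc[OF that] by auto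
  have Ppos: "disc_ip N x w (P m) (P m) > 0" if "m < n" for m
    using ip_self_pos[OF wpos inj _ Pnz[OF that]] Pdeg[OF that] that less.prems by simp
  have Porth: "disc_ip N x w (P l) (P m) = 0" if "l < n" "m < n" "l \<noteq> m" for l m
  proof (cases "m < l")
    case True then show ?thesis using Port[OF that(1)] Pdeg[OF that(2)] by simp
  next
    case False then have "l < m" using that by simp
    then show ?thesis using Port[OF that(2), of "P l"] Pdeg[OF that(1)] ip_sym by metis
  qed
  have span: "\<forall>q. (\<forall>i\<ge>k. coeff q i = 0) \<longrightarrow> (\<exists>d. q = (\<Sum>m<k. smult (d m) (P m)))" if "k \<le> n" for k
    using that
  proof (induction k)
    case 0
    then show ?case by (auto intro: poly_eqI)
  next
    case (Suc k)
    show ?case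
    proof (intro allI impI)
      fix q :: "real poly" assume q: "\<forall>i\<ge>Suc k. coeff q i = 0"
      define q' where "q' = q - smult (coeff q k) (P k)"
      have kn: "k < n" using Suc.prems by simp
      have "\<forall>i\<ge>k. coeff q' i = 0"
      proof (intro allI impI)
        fix i assume "k \<le> i"
        show "coeff q' i = 0"
        proof (cases "i = k")
          case True then show ?thesis using Plc[OF kn] Pdeg[OF kn] by (simp add: q'_def)
        next
          case False then have "i > k" using \<open>k \<le> i\<close> by simp
          then show ?thesis using q Pdeg[OF kn] by (simp add: q'_def coeff_eq_0)
        qed
      qed
      then obtain d where d: "q' = (\<Sum>m<k. smult (d m) (P m))" using Suc.IH Suc.prems by auto
      define d' where "d' = d(k := coeff q k)"
      have "q = (\<Sum>m<k. smult (d m) (P m)) + smult (coeff q k) (P k)" using d by (simp add: q'_def)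
      also have "(\<Sum>m<k. smult (d m) (P m)) = (\<Sum>m<k. smult (d' m) (P m))"
        by (intro sum.cong) (auto simp: d'_def)
      finally have "q = (\<Sum>m<Suc k. smult (d' m) (P m))" by (simp add: d'_def)
      then show "\<exists>d. q = (\<Sum>m<Suc k. smult (d m) (P m))" by blast
    qed
  qed
  define c where "c m = disc_ip N x w (P m) (monom 1 n) / disc_ip N x w (P m) (P m)" for m
  define p where "p = monom 1 n - (\<Sum>m<n. smult (c m) (P m))"
  have cs: "coeff (\<Sum>m<n. smult (c m) (P m)) i = 0" if "i \<ge> n" for i
    unfolding coeff_sum using that Pdeg by (intro sum.neutral) (auto simp: coeff_eq_0)
  have cp: "coeff p i = (if i = n then 1 else 0)" if "i \<ge> n" for i
    using cs[OF that] by (simp add: p_def coeff_monom)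
  have degp: "degree p = n"
  proof (rule antisym)
    show "degree p \<le> n" using cp by (intro degree_le) auto
    show "n \<le> degree p" using cp[of n] by (intro le_degree) simp
  qed
  have lcp: "lead_coeff p = 1" using degp cp[of n] by simp
  have orthPm: "disc_ip N x w p (P m) = 0" if "m < n" for m
  proof -
    have "(\<Sum>l<n. c l * disc_ip N x w (P m) (P l)) = (\<Sum>l<n. if l = m then c m * disc_ip N x w (P m) (P m) else 0)"
      using Porth that by (intro sum.cong) auto
    also have "\<dots> = c m * disc_ip N x w (P m) (P m)" using that by simp
    finally have e: "(\<Sum>l<n. c l * disc_ip N x w (P m) (P l)) = c m * disc_ip N x w (P m) (P m)" .
    have "disc_ip N x w p (P m) = disc_ip N x w (P m) p" by (rule ip_sym)
    also have "\<dots> = disc_ip N x w (P m) (monom 1 n) - c m * disc_ip N x w (P m) (P m)"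
      unfolding p_def ip_diff2 ip_sum2 ip_smult2 e ..
    also have "\<dots> = 0" using Ppos[OF that] by (simp add: c_def)
    finally show ?thesis .
  qed
  have "disc_ip N x w p q = 0" if "degree q < n" for q
  proof -
    have "\<forall>i\<ge>n. coeff q i = 0" using that by (auto simp: coeff_eq_0)
    then obtain d where "q = (\<Sum>m<n. smult (d m) (P m))" using span[of n] by auto
    then show ?thesis using orthPm by (simp add: ip_sum2 ip_smult2)
  qed
  then show ?case using degp lcp unfolding isOP_def by blast
qed

lemma OP_unique:
  assumes wpos: "\<And>i. 1 \<le> i \<Longrightarrow> i \<le> N \<Longrightarrow> w i > 0" and inj: "inj_on x {1..N}"
    and "n < N" and "isOP N x w n p" and "isOP N x w n p'"
  shows "p = p'"
proof (rule ccontr)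
  assume ne: "p \<noteq> p'"
  define d where "d = p - p'"
  have dnz: "d \<noteq> 0" using ne by (simp add: d_def)
  have cd: "coeff d i = 0" if "i \<ge> n" for i
  proof (cases "i = n")
    case True
    have "coeff p n = 1" "coeff p' n = 1" using assms(4,5) unfolding isOP_def by auto
    then show ?thesis using True by (simp add: d_def)
  next
    case False then show ?thesis using assms(4,5) that by (simp add: isOP_def d_def coeff_eq_0)
  qed
  have "degree d < n"
  proof (rule ccontr)
    assume "\<not> degree d < n"
    then have "coeff d (degree d) = 0" using cd by simp
    then show False using dnz by simp
  qed
  then have "disc_ip N x w p d = 0" "disc_ip N x w p' d = 0"
    using assms(4,5) unfolding isOP_def by auto
  then have "disc_ip N x w d d = 0"
    using ip_diff2[of N x w d p p'] ip_sym[of N x w d p] ip_sym[of N x w d p'] by (simp add: d_def)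
  moreover have "disc_ip N x w d d > 0"
    using ip_self_pos[OF wpos inj _ dnz] \<open>degree d < n\<close> assms(3) by simp
  ultimately show False by simp
qed

lemma monic_OP_isOP:
  assumes wpos: "\<And>i. 1 \<le> i \<Longrightarrow> i \<le> N \<Longrightarrow> w i > 0" and inj: "inj_on x {1..N}"
    and "n < N"
  shows "isOP N x w n (monic_OP N x w n)"
proof -
  obtain p where p: "isOP N x w n p" using OP_exists[where w=w, OF wpos inj assms(3)] by blast
  have "\<exists>!p. isOP N x w n p" using p OP_unique[where w=w, OF wpos inj assms(3)] by blast
  then show ?thesis unfolding monic_OP_def isOP_def[symmetric] by (rule theI')
qed

lemma OP_root_between:
  assumes wpos: "\<And>i. 1 \<le> i \<Longrightarrow> i \<le> N \<Longrightarrow> w i > 0" and inj: "inj_on x {1..N}"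
    and "n < N" and P: "isOP N x w n p" and r: "poly p r = 0"
    and s: "\<forall>i\<in>{1..N}. s * (x i - r) > 0"
  shows False
proof -
  have "[:-r, 1:] dvd p" using r by (simp add: poly_eq_0_iff_dvd)
  then obtain q where q: "p = [:-r, 1:] * q" by (auto simp: dvd_def)
  have pnz: "p \<noteq> 0" using P unfolding isOP_def by auto
  then have qnz: "q \<noteq> 0" using q by auto
  have "degree p = Suc (degree q)" using qnz by (subst q, subst degree_mult_eq) auto
  then have dq: "degree q < n" using P unfolding isOP_def by simp
  have z: "disc_ip N x w p q = 0" using P dq unfolding isOP_def by auto
  have nn: "\<forall>i\<in>{1..N}. 0 \<le> w i * (s * (x i - r)) * (poly q (x i) * poly q (x i))"
  proof
    fix i assume i: "i \<in> {1..N}"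
    have "w i \<ge> 0" using wpos[of i] i by auto
    have "s * (x i - r) > 0" using s i by blast
    note this[THEN less_imp_le]
    then show "0 \<le> w i * (s * (x i - r)) * (poly q (x i) * poly q (x i))" using \<open>w i \<ge> 0\<close> by simp
  qed
  have "(\<Sum>i=1..N. w i * (s * (x i - r)) * (poly q (x i) * poly q (x i))) = s * disc_ip N x w p q"
    unfolding disc_ip_def q by (simp add: sum_distrib_left algebra_simps)
  then have "(\<Sum>i=1..N. w i * (s * (x i - r)) * (poly q (x i) * poly q (x i))) = 0" using z by simp
  then have each: "\<forall>i\<in>{1..N}. w i * (s * (x i - r)) * (poly q (x i) * poly q (x i)) = 0"
    using sum_nonneg_eq_0_iff[of "{1..N}" "\<lambda>i. w i * (s * (x i - r)) * (poly q (x i) * poly q (x i))"] nn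
    by (simp del: mult_eq_0_iff)
  have "disc_ip N x w q q = 0"
    unfolding disc_ip_def
  proof (intro sum.neutral ballI)
    fix i assume i: "i \<in> {1..N}"
    have "w i > 0" using wpos i by auto
    moreover have "s * (x i - r) > 0" using s i by blast
    ultimately have "w i \<noteq> 0" "s * (x i - r) \<noteq> 0" by auto
    moreover have "w i * (s * (x i - r)) * (poly q (x i) * poly q (x i)) = 0" using each i by blast
    ultimately have "poly q (x i) * poly q (x i) = 0" by simp
    then show "w i * poly q (x i) * poly q (x i) = 0" by simp
  qed
  moreover have "disc_ip N x w q q > 0" using ip_self_pos[OF wpos inj _ qnz] dq assms(3) by simp
  ultimately show False by simp
qed

lemma OP_root_bound:
  assumes wpos: "\<And>i. 1 \<le> i \<Longrightarrow> i \<le> N \<Longrightarrow> w i > 0" and inj: "inj_on x {1..N}"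
    and "n < N" and P: "isOP N x w n p" and r: "poly p r = 0"
  shows "\<bar>r\<bar> \<le> (\<Sum>i=1..N. \<bar>x i\<bar>)"
proof -
  obtain i where i: "i \<in> {1..N}" "x i \<ge> r"
    using OP_root_between[where w=w, OF wpos inj assms(3) P r, of "-1"] by force
  obtain i' where i': "i' \<in> {1..N}" "x i' \<le> r"
    using OP_root_between[where w=w, OF wpos inj assms(3) P r, of 1] by force
  have "\<bar>x i\<bar> \<le> (\<Sum>i=1..N. \<bar>x i\<bar>)" "\<bar>x i'\<bar> \<le> (\<Sum>i=1..N. \<bar>x i\<bar>)"
    using i(1) i'(1) by (auto intro!: member_le_sum)
  then show ?thesis using i i' by linarith
qed

lemma nth_cases: "xs ! n \<in> set xs \<or> (\<exists>m\<le>n. xs ! n = [] ! m)"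
proof (induction xs arbitrary: n)
  case Nil then show ?case by auto
next
  case (Cons a xs)
  show ?case
  proof (cases n)
    case 0 then show ?thesis by simp
  next
    case (Suc n') then show ?thesis using Cons.IH[of n'] by (metis le_SucI list.set_intros(2) nth_Cons_Suc)
  qed
qed

lemma OP_zero_bound:
  assumes wpos: "\<And>i. 1 \<le> i \<Longrightarrow> i \<le> N \<Longrightarrow> w i > 0" and inj: "inj_on x {1..N}"
    and "n < N"
  shows "\<bar>OP_zero N x w n k\<bar> \<le> (\<Sum>i=1..N. \<bar>x i\<bar>) + (\<Sum>m\<le>k. \<bar>[] ! m\<bar>)"
proof -
  let ?p = "monic_OP N x w n"
  have P: "isOP N x w n ?p" by (rule monic_OP_isOP[where w=w, OF wpos inj assms(3)])
  then have "?p \<noteq> 0" unfolding isOP_def by auto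
  then have fin: "finite {r. poly ?p r = 0}" by (rule poly_roots_finite)
  let ?L = "rev (sorted_list_of_set {r. poly ?p r = 0})"
  have S0: "0 \<le> (\<Sum>i=1..N. \<bar>x i\<bar>)" "0 \<le> (\<Sum>m\<le>k. \<bar>([]::real list) ! m\<bar>)"
    by (auto intro: sum_nonneg)
  consider "?L ! (k - 1) \<in> set ?L" | m where "m \<le> k - 1" "?L ! (k - 1) = [] ! m"
    using nth_cases by blast
  then show ?thesis
  proof cases
    case 1
    then have "poly ?p (?L ! (k - 1)) = 0" using fin by simp
    then have "\<bar>?L ! (k - 1)\<bar> \<le> (\<Sum>i=1..N. \<bar>x i\<bar>)" using OP_root_bound[where w=w, OF wpos inj assms(3) P] by blast
    then show ?thesis using S0 unfolding OP_zero_def by linarith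
  next
    case 2
    have "\<bar>([]::real list) ! m\<bar> \<le> (\<Sum>m\<le>k. \<bar>([]::real list) ! m\<bar>)"
      using 2(1) by (intro member_le_sum) auto
    then show ?thesis using S0 2(2) unfolding OP_zero_def by linarith
  qed
qed

definition LL :: "(nat \<Rightarrow> real) \<Rightarrow> nat set \<Rightarrow> real poly" where
  "LL x S = (\<Prod>i\<in>S. [:- x i, 1:])"

lemma poly_LL: "poly (LL x S) y = (\<Prod>i\<in>S. (y - x i))"
  unfolding LL_def by (simp add: poly_prod)

lemma LL_degree: "finite S \<Longrightarrow> degree (LL x S) = card S"
  unfolding LL_def by (subst degree_prod_eq_sum_degree) auto

lemma LL_lead: "lead_coeff (LL x S) = 1"
  unfolding LL_def by (simp add: lead_coeff_prod)

lemma LL_zero: "finite S \<Longrightarrow> i \<in> S \<Longrightarrow> poly (LL x S) (x i) = 0"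
  unfolding poly_LL by (rule prod_zero) auto

lemma LL_nonzero: "finite S \<Longrightarrow> (\<And>i. i \<in> S \<Longrightarrow> x i \<noteq> x m) \<Longrightarrow> poly (LL x S) (x m) \<noteq> 0"
proof
  assume fin: "finite S" and ne: "\<And>i. i \<in> S \<Longrightarrow> x i \<noteq> x m" and z: "poly (LL x S) (x m) = 0"
  then obtain i where "i \<in> S" "x m - x i = 0" unfolding poly_LL by (auto simp: prod_zero_iff)
  then show False using ne by auto
qed

lemma LL_remove: "finite S \<Longrightarrow> i \<in> S \<Longrightarrow> poly (LL x S) y = (y - x i) * poly (LL x (S - {i})) y"
  unfolding poly_LL by (rule prod.remove)

lemma lagrange:
  assumes inj: "inj_on x {1..j}" and "j \<ge> 1" and dP: "degree P = j" and lP: "lead_coeff P = 1"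
  shows "poly P y = poly (LL x {1..j}) y +
     (\<Sum>m\<in>{1..j}. poly P (x m) * poly (LL x ({1..j}-{m})) y / poly (LL x ({1..j}-{m})) (x m))"
proof -
  define R where "R = LL x {1..j} + (\<Sum>m\<in>{1..j}. smult (poly P (x m) / poly (LL x ({1..j}-{m})) (x m)) (LL x ({1..j}-{m})))"
  have dLm: "degree (LL x ({1..j}-{m})) < j" if "m \<in> {1..j}" for m
    using that \<open>j \<ge> 1\<close> by (simp add: LL_degree)
  have nzm: "poly (LL x ({1..j}-{m})) (x m) \<noteq> 0" if "m \<in> {1..j}" for m
    using that inj by (intro LL_nonzero) (auto dest: inj_onD)
  have dsum: "degree (\<Sum>m\<in>{1..j}. smult (poly P (x m) / poly (LL x ({1..j}-{m})) (x m)) (LL x ({1..j}-{m}))) < j"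
    using \<open>j \<ge> 1\<close>
  proof (intro le_less_trans[OF degree_sum_le])
    show "Max (insert 0 ((\<lambda>m. degree (smult (poly P (x m) / poly (LL x ({1..j} - {m})) (x m)) (LL x ({1..j} - {m})))) ` {1..j})) < j"
      using dLm \<open>j \<ge> 1\<close> by (subst Max_less_iff) (auto intro: le_less_trans[OF degree_smult_le])
  qed auto
  have dQ: "degree (LL x {1..j}) = j" by (simp add: LL_degree)
  have "P = R"
  proof (rule poly_eqI_degree_lead_coeff[of P j R "x ` {1..j}"])
    show "coeff P j = coeff R j"
      using lP dP dsum LL_lead[of x "{1..j}"] dQ by (simp add: R_def coeff_eq_0)
    show "j \<le> card (x ` {1..j})" using card_image[OF inj] by simp
    show "degree P \<le> j" using dP by simp
    show "degree R \<le> j" unfolding R_def using dQ dsum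
      by (intro order.trans[OF degree_add_le]) auto
    fix z assume "z \<in> x ` {1..j}"
    then obtain k where k: "k \<in> {1..j}" "z = x k" by auto
    have "poly R z = (\<Sum>m\<in>{1..j}. poly P (x m) / poly (LL x ({1..j}-{m})) (x m) * poly (LL x ({1..j}-{m})) (x k))"
      unfolding R_def using LL_zero[of "{1..j}" k x] k by (simp add: poly_sum)
    also have "\<dots> = (\<Sum>m\<in>{1..j}. if m = k then poly P (x k) else 0)"
    proof (intro sum.cong refl)
      fix m assume m: "m \<in> {1..j}"
      show "poly P (x m) / poly (LL x ({1..j}-{m})) (x m) * poly (LL x ({1..j}-{m})) (x k) = (if m = k then poly P (x k) else 0)"
        using nzm[OF m] LL_zero[of "{1..j}-{m}" k x] k by auto
    qed
    also have "\<dots> = poly P z" using k by simp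
    finally show "poly P z = poly R z" by simp
  qed
  then have "poly P y = poly R y" by simp
  also have "\<dots> = poly (LL x {1..j}) y +
     (\<Sum>m\<in>{1..j}. poly P (x m) * poly (LL x ({1..j}-{m})) y / poly (LL x ({1..j}-{m})) (x m))"
    unfolding R_def by (simp add: poly_sum)
  finally show ?thesis .
qed

lemma abs_le_1_sq: "\<bar>a::real\<bar> \<le> 1 + a\<^sup>2"
proof (cases "\<bar>a\<bar> \<le> 1")
  case True then show ?thesis by (simp add: add_increasing2)
next
  case False
  then have "\<bar>a\<bar> * 1 \<le> \<bar>a\<bar> * \<bar>a\<bar>" by (intro mult_left_mono) auto
  then show ?thesis by (simp add: power2_eq_square abs_mult_self_eq)
qed

lemma OP_values_bound:
  assumes vpos: "\<And>i. 1 \<le> i \<Longrightarrow> i \<le> N \<Longrightarrow> v i > 0" and inj: "inj_on x {1..N}"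
    and j: "1 \<le> j" "j < N" and P: "isOP N x v j P"
    and rpos: "\<And>i. 1 \<le> i \<Longrightarrow> i \<le> N \<Longrightarrow> rho i > 0"
    and vle: "\<And>i. j < i \<Longrightarrow> i \<le> N \<Longrightarrow> v i \<le> rho i"
    and m: "m \<in> {1..j}"
  shows "v m * \<bar>poly P (x m)\<bar> * \<bar>poly (LL x ({1..j}-{m})) (x m)\<bar>
     \<le> (\<Sum>i=1..N. (1 + rho i * (\<Sum>l=1..N. rho l * (poly (LL x {1..j}) (x l))\<^sup>2)) * \<bar>poly (LL x ({1..j}-{m})) (x i)\<bar>)"
proof -
  define Q where "Q = LL x {1..j}"
  define K where "K = (\<Sum>l=1..N. rho l * (poly Q (x l))\<^sup>2)"
  define Lm where "Lm = LL x ({1..j}-{m})"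
  have K0: "K \<ge> 0" unfolding K_def
  proof (intro sum_nonneg)
    fix l assume "l \<in> {1..N}"
    then have "rho l \<ge> 0" using rpos by (simp add: less_imp_le)
    then show "0 \<le> rho l * (poly Q (x l))\<^sup>2" by simp
  qed
  have dP: "degree P = j" and lP: "lead_coeff P = 1" and oP: "\<And>q. degree q < j \<Longrightarrow> disc_ip N x v P q = 0"
    using P unfolding isOP_def by auto
  have Qz: "poly Q (x l) = 0" if "l \<in> {1..j}" for l unfolding Q_def using that by (intro LL_zero) auto
  have ipQQ: "disc_ip N x v Q Q \<le> K"
    unfolding disc_ip_def K_def
  proof (intro sum_mono)
    fix l assume l: "l \<in> {1..N}"
    show "v l * poly Q (x l) * poly Q (x l) \<le> rho l * (poly Q (x l))\<^sup>2"
    proof (cases "l \<le> j")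
      case True then show ?thesis using Qz[of l] l by simp
    next
      case False
      then have "v l \<le> rho l" using vle l by simp
      then show ?thesis by (simp add: power2_eq_square mult.assoc mult_right_mono)
    qed
  qed
  define D where "D = P - Q"
  have dQ: "degree Q = j" "lead_coeff Q = 1" unfolding Q_def by (simp add: LL_degree) (rule LL_lead)
  have cD: "coeff D i = 0" if "i \<ge> j" for i
  proof (cases "i = j")
    case True
    have "coeff Q j = 1" using dQ by metis
    moreover have "coeff P j = 1" using dP lP by metis
    ultimately show ?thesis using True by (simp add: D_def)
  next
    case False then show ?thesis using that dP dQ by (simp add: D_def coeff_eq_0)
  qed
  have dD: "degree D < j \<or> D = 0"
  proof (rule ccontr)
    assume "\<not> ?thesis"
    then have "coeff D (degree D) = 0" "D \<noteq> 0" using cD by auto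
    then show False by simp
  qed
  have PD: "disc_ip N x v P D = 0"
    using dD oP by (auto simp: disc_ip_def)
  have DD: "disc_ip N x v D D \<ge> 0" using ip_self_nonneg[of N v x D] vpos by blast
  have "disc_ip N x v D D = disc_ip N x v Q Q - disc_ip N x v P P"
    using PD unfolding D_def
    by (simp add: ip_diff2 ip_sym[of N x v "P - Q"] ip_sym[of N x v Q P])
  then have PPle: "disc_ip N x v P P \<le> K" using DD ipQQ by linarith
  have term_le: "v i * (poly P (x i))\<^sup>2 \<le> K" if i: "i \<in> {1..N}" for i
  proof -
    have "v i * (poly P (x i))\<^sup>2 = v i * poly P (x i) * poly P (x i)" by (simp add: power2_eq_square)
    also have "\<dots> \<le> disc_ip N x v P P" unfolding disc_ip_def
    proof (intro member_le_sum[OF i])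
      fix l assume "l \<in> {1..N} - {i}"
      then have "v l \<ge> 0" using vpos by (simp add: less_imp_le)
      then show "0 \<le> v l * poly P (x l) * poly P (x l)" by (simp add: mult.assoc)
    qed simp
    finally show ?thesis using PPle by simp
  qed
  have vP: "\<bar>v i * poly P (x i)\<bar> \<le> 1 + rho i * K" if i: "i \<in> {1..N}" "j < i" for i
  proof -
    have "(v i * poly P (x i))\<^sup>2 = v i * (v i * (poly P (x i))\<^sup>2)" by (simp add: power2_eq_square)
    also have "\<dots> \<le> v i * K" using term_le[OF i(1)] vpos[of i] i by (intro mult_left_mono) auto
    also have "\<dots> \<le> rho i * K" using vle[of i] i K0 by (intro mult_right_mono) auto
    finally show ?thesis using abs_le_1_sq[of "v i * poly P (x i)"] by linarith
  qed
  have dLm: "degree Lm < j" unfolding Lm_def using m by (simp add: LL_degree)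
  have "disc_ip N x v P Lm = 0" using oP dLm by simp
  then have "(\<Sum>i\<in>{1..N}. v i * poly P (x i) * poly Lm (x i)) = 0" by (simp add: disc_ip_def)
  moreover have "(\<Sum>i\<in>{1..N}. v i * poly P (x i) * poly Lm (x i)) =
     v m * poly P (x m) * poly Lm (x m) + (\<Sum>i\<in>{1..N}-{m}. v i * poly P (x i) * poly Lm (x i))"
    using m j by (intro sum.remove) auto
  ultimately have "\<bar>v m * poly P (x m) * poly Lm (x m)\<bar> = \<bar>\<Sum>i\<in>{1..N}-{m}. v i * poly P (x i) * poly Lm (x i)\<bar>"
    by simp
  also have "\<dots> \<le> (\<Sum>i\<in>{1..N}-{m}. \<bar>v i * poly P (x i) * poly Lm (x i)\<bar>)" by (rule sum_abs)
  also have "\<dots> \<le> (\<Sum>i\<in>{1..N}-{m}. (1 + rho i * K) * \<bar>poly Lm (x i)\<bar>)"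
  proof (intro sum_mono)
    fix i assume i: "i \<in> {1..N}-{m}"
    show "\<bar>v i * poly P (x i) * poly Lm (x i)\<bar> \<le> (1 + rho i * K) * \<bar>poly Lm (x i)\<bar>"
    proof (cases "i \<le> j")
      case True
      then have "poly Lm (x i) = 0" unfolding Lm_def using i by (intro LL_zero) auto
      then show ?thesis by simp
    next
      case False
      then show ?thesis using vP[of i] i by (simp add: abs_mult mult_right_mono)
    qed
  qed
  also have "\<dots> \<le> (\<Sum>i\<in>{1..N}. (1 + rho i * K) * \<bar>poly Lm (x i)\<bar>)"
  proof (intro sum_mono2)
    fix i assume "i \<in> {1..N} - ({1..N} - {m})"
    then have "rho i \<ge> 0" using rpos by (simp add: less_imp_le)
    then show "0 \<le> (1 + rho i * K) * \<bar>poly Lm (x i)\<bar>" using K0 by simp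
  qed auto
  finally show ?thesis unfolding K_def Q_def Lm_def using vpos[of m] m j
    by (simp add: abs_mult mult.assoc)
qed

lemma roots_from_signs:
  fixes P :: "real poly" and z0 :: "nat \<Rightarrow> real"
  assumes dP: "degree P = j" and Pnz: "P \<noteq> 0"
    and sgn: "\<And>m. m \<in> {1..j} \<Longrightarrow> poly P (z0 m - d m) * poly P (z0 m + d m) < 0"
    and dpos: "\<And>m. m \<in> {1..j} \<Longrightarrow> d m > 0"
    and sep: "\<And>a b. 1 \<le> a \<Longrightarrow> a < b \<Longrightarrow> b \<le> j \<Longrightarrow> z0 b + d b < z0 a - d a"
    and k: "k \<in> {1..j}"
  shows "\<bar>rev (sorted_list_of_set {r. poly P r = 0}) ! (k - 1) - z0 k\<bar> < d k"
proof -
  have "\<forall>m\<in>{1..j}. \<exists>r. z0 m - d m < r \<and> r < z0 m + d m \<and> poly P r = 0"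
  proof
    fix m assume m: "m \<in> {1..j}"
    show "\<exists>r. z0 m - d m < r \<and> r < z0 m + d m \<and> poly P r = 0"
      using poly_IVT[OF _ sgn[OF m]] dpos[OF m] by auto
  qed
  then obtain z where z: "\<And>m. m \<in> {1..j} \<Longrightarrow> z0 m - d m < z m \<and> z m < z0 m + d m \<and> poly P (z m) = 0"
    by metis
  have zdec: "z b < z a" if "a \<in> {1..j}" "b \<in> {1..j}" "a < b" for a b
    using z[OF that(1)] z[OF that(2)] sep[of a b] that by auto
  have injz: "inj_on z {1..j}"
    by (rule inj_onI) (metis linorder_neqE_nat zdec less_irrefl)
  define S where "S = {r. poly P r = 0}"
  have finS: "finite S" unfolding S_def using Pnz by (rule poly_roots_finite)
  have sub: "z ` {1..j} \<subseteq> S" using z unfolding S_def by auto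
  have "card S \<le> j" unfolding S_def using card_poly_roots_bound[OF Pnz] dP by simp
  moreover have cz: "card (z ` {1..j}) = j" using card_image[OF injz] by simp
  ultimately have Seq: "S = z ` {1..j}" using card_subset_eq[OF finS sub] card_mono[OF finS sub] by simp
  define l where "l = map z (rev [1..<j+1])"
  have "sorted_wrt (<) l"
    unfolding l_def sorted_wrt_map sorted_wrt_rev
    by (rule sorted_wrt_mono_rel[OF _ sorted_wrt_upt]) (auto intro: zdec)
  moreover have "set l = S" unfolding l_def Seq by auto
  moreover have "length l = card S" unfolding l_def Seq cz by simp
  ultimately have "sorted_list_of_set S = l" using sorted_list_of_set_unique[OF finS] by blast
  moreover have "rev l ! (k - 1) = z k"
  proof -
    have "k - 1 < length [1..<j+1]" using k by auto
    then have "map z [1..<j+1] ! (k - 1) = z ([1..<j+1] ! (k - 1))" by (rule nth_map)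
    also have "[1..<j+1] ! (k - 1) = k" using k by (subst nth_upt) auto
    finally show ?thesis unfolding l_def rev_map rev_rev_ident .
  qed
  ultimately have "rev (sorted_list_of_set S) ! (k - 1) = z k" by simp
  then show ?thesis using z[OF k] unfolding S_def by auto
qed

lemma sign_at:
  fixes P :: "real poly"
  assumes inj: "inj_on x {1..j}" and j1: "j \<ge> 1" and dP: "degree P = j" and lP: "lead_coeff P = 1"
    and m: "m \<in> {1..j}" and s: "s = 1 \<or> s = -1" and d: "d > 0"
    and a: "\<And>l. l \<in> {1..j} \<Longrightarrow> \<bar>poly P (x l)\<bar> \<le> a l"
    and cont: "\<bar>poly (LL x ({1..j}-{m})) (x m + s*d) - poly (LL x ({1..j}-{m})) (x m)\<bar>
                 \<le> \<bar>poly (LL x ({1..j}-{m})) (x m)\<bar> / 4"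
    and Bb: "\<And>l. l \<in> {1..j}-{m} \<Longrightarrow> \<bar>poly (LL x ({1..j}-{l}-{m})) (x m + s*d)\<bar> \<le> B"
    and small: "(\<Sum>l\<in>{1..j}-{m}. a l * B / \<bar>poly (LL x ({1..j}-{l})) (x l)\<bar>)
                 \<le> \<bar>poly (LL x ({1..j}-{m})) (x m)\<bar> / 4"
    and big: "5/4 * a m < d * \<bar>poly (LL x ({1..j}-{m})) (x m)\<bar> / 2"
  shows "s * sgn (poly (LL x ({1..j}-{m})) (x m)) * poly P (x m + s*d) > 0"
proof -
  define y where "y = x m + s*d"
  define Lm where "Lm = LL x ({1..j}-{m})"
  define c where "c = \<bar>poly Lm (x m)\<bar>"
  define \<sigma> where "\<sigma> = sgn (poly Lm (x m))"
  have nz: "poly (LL x ({1..j}-{l})) (x l) \<noteq> 0" if "l \<in> {1..j}" for l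
    using that inj by (intro LL_nonzero) (auto dest: inj_onD)
  have c0: "c > 0" unfolding c_def Lm_def using nz[OF m] by simp
  have sc: "\<sigma> * poly Lm (x m) = c" unfolding \<sigma>_def c_def by (metis abs_sgn mult.commute)
  have sabs: "\<bar>\<sigma>\<bar> = 1" unfolding \<sigma>_def using nz[OF m] Lm_def by (simp add: abs_sgn_eq)
  have ss: "s * s = 1" using s by auto
  have lag: "poly P y = poly (LL x {1..j}) y +
     (\<Sum>l\<in>{1..j}. poly P (x l) * poly (LL x ({1..j}-{l})) y / poly (LL x ({1..j}-{l})) (x l))"
    by (rule lagrange[OF inj j1 dP lP])
  have Qy: "poly (LL x {1..j}) y = s * d * poly Lm y"
    unfolding Lm_def using LL_remove[of "{1..j}" m x y] m by (simp add: y_def)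
  have Ll: "poly (LL x ({1..j}-{l})) y = s * d * poly (LL x ({1..j}-{l}-{m})) y" if "l \<in> {1..j}-{m}" for l
    using LL_remove[of "{1..j}-{l}" m x y] that m by (simp add: y_def)
  define T3 where "T3 = (\<Sum>l\<in>{1..j}-{m}. poly P (x l) * poly (LL x ({1..j}-{l}-{m})) y / poly (LL x ({1..j}-{l})) (x l))"
  have "(\<Sum>l\<in>{1..j}. poly P (x l) * poly (LL x ({1..j}-{l})) y / poly (LL x ({1..j}-{l})) (x l))
      = poly P (x m) * poly Lm y / poly Lm (x m) +
        (\<Sum>l\<in>{1..j}-{m}. poly P (x l) * poly (LL x ({1..j}-{l})) y / poly (LL x ({1..j}-{l})) (x l))"
    unfolding Lm_def using m by (intro sum.remove) auto
  also have "(\<Sum>l\<in>{1..j}-{m}. poly P (x l) * poly (LL x ({1..j}-{l})) y / poly (LL x ({1..j}-{l})) (x l))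
      = s * d * T3"
    unfolding T3_def sum_distrib_left
  proof (intro sum.cong refl)
    fix l assume l: "l \<in> {1..j}-{m}"
    show "poly P (x l) * poly (LL x ({1..j}-{l})) y / poly (LL x ({1..j}-{l})) (x l) =
      s * d * (poly P (x l) * poly (LL x ({1..j}-{l}-{m})) y / poly (LL x ({1..j}-{l})) (x l))"
      unfolding Ll[OF l] by simp
  qed
  finally have Py: "poly P y = s * d * poly Lm y + poly P (x m) * poly Lm y / poly Lm (x m) + s * d * T3"
    using lag Qy by simp
  have "s * \<sigma> * poly P y = d * (\<sigma> * poly Lm y) + s * \<sigma> * (poly P (x m) * poly Lm y / poly Lm (x m)) + d * \<sigma> * T3"
    unfolding Py by (simp add: algebra_simps ss)
  moreover have "\<sigma> * poly Lm y \<ge> 3/4 * c"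
  proof -
    have "\<sigma> * poly Lm y = c + \<sigma> * (poly Lm y - poly Lm (x m))" using sc by (simp add: algebra_simps)
    moreover have "\<bar>\<sigma> * (poly Lm y - poly Lm (x m))\<bar> \<le> c / 4"
      using cont sabs unfolding c_def Lm_def y_def by (simp add: abs_mult)
    ultimately show ?thesis by linarith
  qed
  moreover have "\<bar>s * \<sigma> * (poly P (x m) * poly Lm y / poly Lm (x m))\<bar> \<le> 5/4 * a m"
  proof -
    have "\<bar>poly Lm y\<bar> \<le> 5/4 * c"
      using cont unfolding c_def Lm_def y_def by linarith
    have "\<bar>s * \<sigma> * (poly P (x m) * poly Lm y / poly Lm (x m))\<bar> = \<bar>poly P (x m)\<bar> * \<bar>poly Lm y\<bar> / c"
      using s sabs unfolding c_def by (auto simp: abs_mult)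
    also have "\<dots> \<le> a m * (5/4 * c) / c"
      using a[OF m] \<open>\<bar>poly Lm y\<bar> \<le> 5/4 * c\<close> c0
      by (intro divide_right_mono mult_mono) auto
    also have "\<dots> = 5/4 * a m" using c0 by simp
    finally show ?thesis .
  qed
  moreover have "\<bar>d * \<sigma> * T3\<bar> \<le> d * (c / 4)"
  proof -
    have "\<bar>T3\<bar> \<le> (\<Sum>l\<in>{1..j}-{m}. \<bar>poly P (x l) * poly (LL x ({1..j}-{l}-{m})) y / poly (LL x ({1..j}-{l})) (x l)\<bar>)"
      unfolding T3_def by (rule sum_abs)
    also have "\<dots> \<le> (\<Sum>l\<in>{1..j}-{m}. a l * B / \<bar>poly (LL x ({1..j}-{l})) (x l)\<bar>)"
    proof (intro sum_mono)
      fix l assume l: "l \<in> {1..j}-{m}"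
      have "\<bar>poly P (x l) * poly (LL x ({1..j}-{l}-{m})) y / poly (LL x ({1..j}-{l})) (x l)\<bar>
          = \<bar>poly P (x l)\<bar> * \<bar>poly (LL x ({1..j}-{l}-{m})) y\<bar> / \<bar>poly (LL x ({1..j}-{l})) (x l)\<bar>"
        by (simp add: abs_mult)
      also have "\<dots> \<le> a l * B / \<bar>poly (LL x ({1..j}-{l})) (x l)\<bar>"
        using a[of l] Bb[OF l] l unfolding y_def
        by (intro divide_right_mono mult_mono) auto
      finally show "\<bar>poly P (x l) * poly (LL x ({1..j}-{l}-{m})) y / poly (LL x ({1..j}-{l})) (x l)\<bar>
          \<le> a l * B / \<bar>poly (LL x ({1..j}-{l})) (x l)\<bar>" .
    qed
    also have "\<dots> \<le> c / 4" using small unfolding c_def Lm_def .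
    finally have "\<bar>T3\<bar> \<le> c / 4" .
    then show ?thesis using d sabs by (simp add: abs_mult mult_left_mono)
  qed
  moreover have "5/4 * a m < d * c / 2" using big unfolding c_def Lm_def .
  moreover have "d * (\<sigma> * poly Lm y) \<ge> d * (3/4 * c)"
    using d calculation(2) by (intro mult_left_mono) auto
  ultimately have e: "s * \<sigma> * poly P y = d * (\<sigma> * poly Lm y) + s * \<sigma> * (poly P (x m) * poly Lm y / poly Lm (x m)) + d * \<sigma> * T3"
    and g1: "\<bar>s * \<sigma> * (poly P (x m) * poly Lm y / poly Lm (x m))\<bar> \<le> 5/4 * a m"
    and g2: "\<bar>d * \<sigma> * T3\<bar> \<le> d * (c / 4)"
    and g3: "d * (3/4 * c) \<le> d * (\<sigma> * poly Lm y)"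
    and g4: "5/4 * a m < d * c / 2"
    by blast+
  have h1: "- (5/4 * a m) \<le> s * \<sigma> * (poly P (x m) * poly Lm y / poly Lm (x m))"
    using g1 by (simp only: abs_le_iff) linarith
  have h2: "- (1/4 * (d * c)) \<le> d * \<sigma> * T3"
    using g2 by (simp only: abs_le_iff) linarith
  have h3: "3/4 * (d * c) \<le> d * (\<sigma> * poly Lm y)" using g3 by simp
  have h4: "5/4 * a m < 1/2 * (d * c)" using g4 by simp
  have "s * \<sigma> * poly P y > 0" unfolding e using h1 h2 h3 h4 by linarith
  then show ?thesis unfolding \<sigma>_def Lm_def y_def .
qed

lemma monic_OP_scale:
  assumes "c > 0"
  shows "monic_OP N x (\<lambda>i. c * w i) n = monic_OP N x w n"
  unfolding monic_OP_def ip_scale using assms by simp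

lemma poly_near:
  fixes p :: "real poly"
  assumes "e > 0"
  shows "\<exists>\<delta>>0. \<forall>y. \<bar>y - a\<bar> \<le> \<delta> \<longrightarrow> \<bar>poly p y - poly p a\<bar> \<le> e"
proof -
  have "(\<lambda>y. poly p y) \<midarrow>a\<rightarrow> poly p a" using poly_isCont[of a p] by (simp add: isCont_def)
  then obtain s where s: "s > 0" "\<And>y. y \<noteq> a \<and> norm (y - a) < s \<Longrightarrow> norm (poly p y - poly p a) < e"
    using assms unfolding LIM_eq by blast
  show ?thesis
  proof (intro exI[of _ "s/2"] conjI allI impI)
    show "s/2 > 0" using s by simp
    fix y assume "\<bar>y - a\<bar> \<le> s/2"
    then show "\<bar>poly p y - poly p a\<bar> \<le> e"
      using s(2)[of y] s(1) assms by (cases "y = a") auto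
  qed
qed

lemma LL_bound:
  assumes "finite S" and "\<And>i. i \<in> S \<Longrightarrow> \<bar>y - x i\<bar> \<le> D" and "D \<ge> 1" and "card S \<le> n"
  shows "\<bar>poly (LL x S) y\<bar> \<le> D ^ n"
proof -
  have "\<bar>poly (LL x S) y\<bar> = (\<Prod>i\<in>S. \<bar>y - x i\<bar>)" unfolding poly_LL by (simp add: abs_prod)
  also have "\<dots> \<le> (\<Prod>i\<in>S. D)" using assms(2) by (intro prod_mono) auto
  also have "\<dots> = D ^ card S" by simp
  also have "\<dots> \<le> D ^ n" using assms(3,4) by (rule power_increasing[rotated])
  finally show ?thesis .
qed



lemma main_jk:
  fixes N :: nat and x rho :: "nat \<Rightarrow> real"
  assumes N2: "N \<ge> 2"
    and xdec: "\<And>i j. 1 \<le> i \<Longrightarrow> i < j \<Longrightarrow> j \<le> N \<Longrightarrow> x j < x i"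
    and rpos: "\<And>i. 1 \<le> i \<Longrightarrow> i \<le> N \<Longrightarrow> rho i > 0"
    and j: "j \<in> {1..N-1}" and k: "k \<in> {1..j}"
  shows "\<exists>C. \<forall>t\<ge>0. \<bar>OP_zero N x (tilt_weight N x rho t) j k - x k\<bar>
             \<le> C * exp (- 2 * t * (x k - x (j + 1)))"
proof -
  have j1: "1 \<le> j" and jN: "j < N" using j N2 by auto
  have inj: "inj_on x {1..N}"
  proof (rule inj_onI)
    fix a b assume "a \<in> {1..N}" "b \<in> {1..N}" "x a = x b"
    then show "a = b" using xdec[of a b] xdec[of b a] by (cases a b rule: linorder_cases) auto
  qed
  have injj: "inj_on x {1..j}" by (rule inj_on_subset[OF inj]) (use jN in auto)
  define v where "v t i = rho i * exp (2 * t * (x i - x (j + 1)))" for t i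
  have vpos: "v t i > 0" if "1 \<le> i" "i \<le> N" for t i unfolding v_def using rpos[OF that] by simp
  have vle: "v t i \<le> rho i" if "t \<ge> 0" "j < i" "i \<le> N" for t i
  proof -
    have "x i \<le> x (j + 1)" using xdec[of "j+1" i] that j1 by (cases "i = j + 1") auto
    then have "exp (2 * t * (x i - x (j + 1))) \<le> 1" using that(1)
      by (simp add: mult_nonneg_nonpos)
    then show ?thesis unfolding v_def using rpos[of i] that j1 by (simp add: mult_left_le)
  qed
  have OPeq: "OP_zero N x (tilt_weight N x rho t) j k = OP_zero N x (v t) j k" for t
  proof -
    define Z where "Z = (\<Sum>l=1..N. rho l * exp (2 * t * x l))"
    have Z0: "Z > 0" unfolding Z_def using rpos N2
      by (intro sum_pos) auto
    have "tilt_weight N x rho t = (\<lambda>i. (exp (2 * t * x (j + 1)) / Z) * v t i)"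
      unfolding tilt_weight_def v_def Z_def[symmetric]
      by (auto simp: fun_eq_iff algebra_simps exp_diff)
    moreover have "monic_OP N x (\<lambda>i. (exp (2 * t * x (j + 1)) / Z) * v t i) j = monic_OP N x (v t) j"
      using Z0 by (intro monic_OP_scale) simp
    ultimately show ?thesis unfolding OP_zero_def by simp
  qed
  define Lm where "Lm m = LL x ({1..j}-{m})" for m
  define c where "c m = \<bar>poly (Lm m) (x m)\<bar>" for m
  have c0: "c m > 0" if "m \<in> {1..j}" for m
  proof -
    have "poly (Lm m) (x m) \<noteq> 0" unfolding Lm_def using that injj by (intro LL_nonzero) (auto dest: inj_onD)
    then show ?thesis by (simp add: c_def)
  qed
  define K where "K m = (\<Sum>i=1..N. (1 + rho i * (\<Sum>l=1..N. rho l * (poly (LL x {1..j}) (x l))\<^sup>2)) * \<bar>poly (LL x ({1..j}-{m})) (x i)\<bar>)" for m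
  define A where "A m = K m / (rho m * c m) + 1" for m
  define E where "E m t = exp (- 2 * t * (x m - x (j + 1)))" for m t
  have K0: "K m \<ge> 0" for m unfolding K_def using rpos
    by (intro sum_nonneg mult_nonneg_nonneg add_nonneg_nonneg) (auto intro: sum_nonneg less_imp_le)
  have A1: "A m \<ge> 1" if "m \<in> {1..j}" for m
    unfolding A_def using K0[of m] c0[OF that] rpos[of m] that jN by simp
  have Pval: "\<bar>poly (monic_OP N x (v t) j) (x m)\<bar> \<le> A m * E m t" if t: "t \<ge> 0" and m: "m \<in> {1..j}" for t m
  proof -
    let ?P = "monic_OP N x (v t) j"
    have P: "isOP N x (v t) j ?P" by (rule monic_OP_isOP[where w="v t", OF vpos inj jN])
    have b: "v t m * \<bar>poly ?P (x m)\<bar> * c m \<le> K m"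
      using OP_values_bound[where v="v t", OF vpos inj j1 jN P rpos vle[OF t] m]
      unfolding K_def c_def Lm_def by simp
    have "exp (2 * t * (x m - x (j + 1))) = 1 / exp (- 2 * t * (x m - x (j + 1)))"
      by (simp add: exp_minus inverse_eq_divide)
    then have vm: "v t m = rho m / E m t" unfolding v_def E_def by simp
    have pos: "rho m > 0" "E m t > 0" "c m > 0" using rpos[of m] m jN c0[OF m] by (auto simp: E_def)
    have "\<bar>poly ?P (x m)\<bar> \<le> K m / (rho m * c m) * E m t"
      using b pos unfolding vm by (simp add: field_simps)
    also have "\<dots> \<le> A m * E m t" unfolding A_def using pos by (intro mult_right_mono) auto
    finally show ?thesis .
  qed
  have "\<forall>m\<in>{1..j}. \<exists>\<delta>>0. \<forall>y. \<bar>y - x m\<bar> \<le> \<delta> \<longrightarrow> \<bar>poly (Lm m) y - poly (Lm m) (x m)\<bar> \<le> c m / 4"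
  proof
    fix m assume "m \<in> {1..j}"
    then have "c m / 4 > 0" using c0 by simp
    then show "\<exists>\<delta>>0. \<forall>y. \<bar>y - x m\<bar> \<le> \<delta> \<longrightarrow> \<bar>poly (Lm m) y - poly (Lm m) (x m)\<bar> \<le> c m / 4"
      by (rule poly_near)
  qed
  then obtain \<delta>c where \<delta>c: "\<And>m. m \<in> {1..j} \<Longrightarrow> \<delta>c m > 0 \<and>
      (\<forall>y. \<bar>y - x m\<bar> \<le> \<delta>c m \<longrightarrow> \<bar>poly (Lm m) y - poly (Lm m) (x m)\<bar> \<le> c m / 4)"
    by metis
  define \<delta>0 where "\<delta>0 = Min (insert 1 ((\<lambda>m. min (\<delta>c m) ((x m - x (m+1))/3)) ` {1..j}))"
  have gap: "x (m + 1) < x m" if "m \<in> {1..j}" for m using xdec[of m "m+1"] that jN by auto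
  have \<delta>0pos: "\<delta>0 > 0" unfolding \<delta>0_def using \<delta>c gap by (subst Min_gr_iff) auto
  have \<delta>0le1: "\<delta>0 \<le> 1" unfolding \<delta>0_def by (intro Min_le) auto
  have \<delta>0le: "\<delta>0 \<le> \<delta>c m" "\<delta>0 \<le> (x m - x (m+1))/3" if "m \<in> {1..j}" for m
  proof -
    have "\<delta>0 \<le> min (\<delta>c m) ((x m - x (m+1))/3)" unfolding \<delta>0_def using that by (intro Min_le) auto
    then show "\<delta>0 \<le> \<delta>c m" "\<delta>0 \<le> (x m - x (m+1))/3" by auto
  qed
  define D where "D = 1 + 2 * (\<Sum>i=1..N. \<bar>x i\<bar>)"
  have xle: "\<bar>x i\<bar> \<le> (\<Sum>i=1..N. \<bar>x i\<bar>)" if "i \<in> {1..N}" for i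
    using that by (intro member_le_sum) auto
  have D1: "D \<ge> 1" unfolding D_def by (simp add: sum_nonneg)
  define B where "B = D ^ j"
  have Bb: "\<bar>poly (LL x ({1..j}-{l}-{m})) y\<bar> \<le> B" if m: "m \<in> {1..j}" and y: "\<bar>y - x m\<bar> \<le> 1" for m l y
    unfolding B_def
  proof (rule LL_bound[OF _ _ D1])
    show "finite ({1..j} - {l} - {m})" by simp
    show "card ({1..j} - {l} - {m}) \<le> j" using card_mono[of "{1..j}" "{1..j} - {l} - {m}"] by auto
    fix i assume i: "i \<in> {1..j} - {l} - {m}"
    have "\<bar>x i\<bar> \<le> (\<Sum>i=1..N. \<bar>x i\<bar>)" "\<bar>x m\<bar> \<le> (\<Sum>i=1..N. \<bar>x i\<bar>)"
      using xle[of i] xle[of m] i m jN by auto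
    then show "\<bar>y - x i\<bar> \<le> D" using y unfolding D_def by linarith
  qed
  define S1 where "S1 = (\<Sum>l\<in>{1..j}. A l * B / c l)"
  define G where "G = (\<Sum>m\<in>{1..j}. (4 * A m / c m + 4 * S1 / c m))"
  have B0: "B \<ge> 0" unfolding B_def using D1 by simp
  have S10: "S1 \<ge> 0" unfolding S1_def
  proof (intro sum_nonneg)
    fix l assume l: "l \<in> {1..j}"
    have "0 \<le> A l * B" using A1[OF l] B0 by simp
    then show "0 \<le> A l * B / c l" using c0[OF l] by simp
  qed
  have Gt1: "4 * A m / c m \<le> G" and Gt2: "4 * S1 / c m \<le> G" if m: "m \<in> {1..j}" for m
  proof -
    have nn: "\<forall>l\<in>{1..j}. 0 \<le> 4 * A l / c l + 4 * S1 / c l"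
    proof
      fix l assume l: "l \<in> {1..j}"
      have "0 \<le> 4 * A l / c l" using A1[OF l] c0[OF l] by simp
      moreover have "0 \<le> 4 * S1 / c l" using S10 c0[OF l] by simp
      ultimately show "0 \<le> 4 * A l / c l + 4 * S1 / c l" by simp
    qed
    have "4 * A m / c m + 4 * S1 / c m \<le> G" unfolding G_def using m nn by (intro member_le_sum) auto
    moreover have "0 \<le> 4 * A m / c m" "0 \<le> 4 * S1 / c m" using A1[OF m] c0[OF m] S10 by auto
    ultimately show "4 * A m / c m \<le> G" "4 * S1 / c m \<le> G" by linarith+
  qed
  have G0: "G \<ge> 0" using Gt1[of 1] A1[of 1] c0[of 1] j1 by (smt (verit) atLeastAtMost_iff divide_nonneg_pos order_refl)
  define \<eta> where "\<eta> = \<delta>0 / (G + 1)"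
  have \<eta>pos: "\<eta> > 0" unfolding \<eta>_def using \<delta>0pos G0 by simp
  have G\<eta>: "G * \<eta> \<le> \<delta>0" unfolding \<eta>_def using \<delta>0pos G0 by (simp add: field_simps)
  define g where "g = x j - x (j + 1)"
  have g0: "g > 0" unfolding g_def using gap[of j] j1 by simp
  define T0 where "T0 = \<bar>ln \<eta>\<bar> / (2 * g)"
  have T00: "T0 \<ge> 0" unfolding T0_def using g0 by simp
  have esmall: "exp (- 2 * t * g) \<le> \<eta>" if "t \<ge> T0" for t
  proof -
    have "2 * T0 * g = \<bar>ln \<eta>\<bar>" unfolding T0_def using g0 by simp
    moreover have "2 * T0 * g \<le> 2 * t * g" using that g0 by (intro mult_right_mono) auto
    ultimately have "- 2 * t * g \<le> ln \<eta>" by linarith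
    then have "exp (- 2 * t * g) \<le> exp (ln \<eta>)" by simp
    then show ?thesis using \<eta>pos by simp
  qed
  have Ele: "E m t \<le> exp (- 2 * t * g)" if "t \<ge> 0" "m \<in> {1..j}" for m t
  proof -
    have "x j \<le> x m" using xdec[of m j] that jN by (cases "m = j") auto
    then have "g \<le> x m - x (j + 1)" unfolding g_def by simp
    then have "- 2 * t * (x m - x (j + 1)) \<le> - 2 * t * g" using that(1) by (simp add: mult_left_mono)
    then show ?thesis unfolding E_def by simp
  qed
  have large: "\<bar>OP_zero N x (v t) j k - x k\<bar> \<le> 4 * A k / c k * E k t" if tT: "t \<ge> T0" for t
  proof -
    have t0: "t \<ge> 0" using tT T00 by simp
    let ?P = "monic_OP N x (v t) j"
    have P: "isOP N x (v t) j ?P" by (rule monic_OP_isOP[where w="v t", OF vpos inj jN])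
    have dP: "degree ?P = j" and lP: "lead_coeff ?P = 1" using P unfolding isOP_def by auto
    have Pnz: "?P \<noteq> 0" using lP by auto
    define e where "e = exp (- 2 * t * g)"
    have e\<eta>: "e \<le> \<eta>" unfolding e_def using esmall[OF tT] .
    have Ge: "G * e \<le> \<delta>0" using G\<eta> e\<eta> G0 by (meson mult_left_mono order.trans)
    have Epos: "E m t > 0" for m unfolding E_def by simp
    define d where "d m = 4 * A m * E m t / c m" for m
    have dpos: "d m > 0" if "m \<in> {1..j}" for m unfolding d_def using A1[OF that] c0[OF that] Epos[of m] by simp
    have dle: "d m \<le> \<delta>0" if m: "m \<in> {1..j}" for m
    proof -
      have "d m = (4 * A m / c m) * E m t" unfolding d_def by simp
      also have "\<dots> \<le> G * e" using Gt1[OF m] Ele[OF t0 m] A1[OF m] c0[OF m] Epos[of m] G0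
        unfolding e_def by (intro mult_mono) auto
      finally show ?thesis using Ge by simp
    qed
    have sgnm: "s * sgn (poly (LL x ({1..j}-{m})) (x m)) * poly ?P (x m + s * d m) > 0"
      if m: "m \<in> {1..j}" and s: "s = 1 \<or> s = -1" for m s
    proof (rule sign_at[OF injj j1 dP lP m s dpos[OF m], where a="\<lambda>l. A l * E l t" and B=B])
      show "\<bar>poly ?P (x l)\<bar> \<le> A l * E l t" if "l \<in> {1..j}" for l using Pval[OF t0 that] .
      have ad: "\<bar>x m + s * d m - x m\<bar> = d m" using s dpos[OF m] by auto
      show "\<bar>poly (LL x ({1..j}-{m})) (x m + s * d m) - poly (LL x ({1..j}-{m})) (x m)\<bar>
             \<le> \<bar>poly (LL x ({1..j}-{m})) (x m)\<bar> / 4"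
        using \<delta>c[OF m] dle[OF m] \<delta>0le(1)[OF m] ad unfolding Lm_def c_def by auto
      show "\<bar>poly (LL x ({1..j}-{l}-{m})) (x m + s * d m)\<bar> \<le> B" if "l \<in> {1..j}-{m}" for l
        using Bb[OF m] dle[OF m] \<delta>0le1 ad by auto
      have "(\<Sum>l\<in>{1..j}-{m}. A l * E l t * B / c l)
            \<le> (\<Sum>l\<in>{1..j}. A l * E l t * B / c l)"
      proof (rule sum_mono2)
        fix l assume "l \<in> {1..j} - ({1..j} - {m})"
        then have l: "l \<in> {1..j}" by auto
        show "0 \<le> A l * E l t * B / c l" using A1[OF l] Epos[of l] B0 c0[OF l] by simp
      qed auto
      also have "\<dots> \<le> (\<Sum>l\<in>{1..j}. A l * B / c l * e)"
      proof (rule sum_mono)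
        fix l assume l: "l \<in> {1..j}"
        have "A l * E l t * B / c l = (A l * B / c l) * E l t" by simp
        also have "\<dots> \<le> (A l * B / c l) * e" unfolding e_def
          using Ele[OF t0 l] A1[OF l] B0 c0[OF l] by (intro mult_left_mono) auto
        finally show "A l * E l t * B / c l \<le> A l * B / c l * e" .
      qed
      also have "\<dots> = S1 * e" unfolding S1_def by (simp add: sum_distrib_right)
      also have "\<dots> = (4 * S1 / c m) * e * (c m / 4)" using c0[OF m] by simp
      also have "\<dots> \<le> G * e * (c m / 4)"
        using Gt2[OF m] c0[OF m] unfolding e_def by (intro mult_right_mono) auto
      also have "\<dots> \<le> 1 * (c m / 4)" using Ge \<delta>0le1 c0[OF m] by (intro mult_right_mono) auto
      finally have X: "(\<Sum>l\<in>{1..j}-{m}. A l * E l t * B / c l) \<le> 1 * (c m / 4)" .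
      then show "(\<Sum>l\<in>{1..j}-{m}. A l * E l t * B / \<bar>poly (LL x ({1..j}-{l})) (x l)\<bar>)
            \<le> \<bar>poly (LL x ({1..j}-{m})) (x m)\<bar> / 4" by (simp add: c_def Lm_def)
      have "d m * \<bar>poly (LL x ({1..j}-{m})) (x m)\<bar> / 2 = 2 * (A m * E m t)"
        unfolding d_def using c0[OF m] unfolding c_def Lm_def by simp
      then show "5/4 * (A m * E m t) < d m * \<bar>poly (LL x ({1..j}-{m})) (x m)\<bar> / 2"
        using A1[OF m] Epos[of m] by simp
    qed
    have sgn_change: "poly ?P (x m - d m) * poly ?P (x m + d m) < 0" if m: "m \<in> {1..j}" for m
    proof -
      define \<sigma> where "\<sigma> = sgn (poly (LL x ({1..j}-{m})) (x m))"
      have h1: "\<sigma> * poly ?P (x m + d m) > 0" using sgnm[OF m, of 1] unfolding \<sigma>_def by simp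
      have h2: "\<sigma> * poly ?P (x m - d m) < 0" using sgnm[OF m, of "-1"] unfolding \<sigma>_def by simp
      have "(\<sigma> * poly ?P (x m + d m)) * (\<sigma> * poly ?P (x m - d m)) < 0" using h1 h2 by (rule mult_pos_neg)
      moreover have "\<sigma> * \<sigma> = 1" unfolding \<sigma>_def using c0[OF m] unfolding c_def Lm_def
        by (simp add: sgn_if)
      moreover have "(\<sigma> * poly ?P (x m + d m)) * (\<sigma> * poly ?P (x m - d m)) = (\<sigma> * \<sigma>) * (poly ?P (x m - d m) * poly ?P (x m + d m))"
        by (simp add: algebra_simps)
      ultimately show ?thesis by simp
    qed
    have sep: "x b + d b < x a - d a" if "1 \<le> a" "a < b" "b \<le> j" for a b
    proof -
      have a: "a \<in> {1..j}" and b: "b \<in> {1..j}" using that by auto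
      have "x b \<le> x (a + 1)" using xdec[of "a+1" b] that jN by (cases "b = a + 1") auto
      moreover have "d a \<le> (x a - x (a+1))/3" "d b \<le> (x a - x (a+1))/3"
        using dle[OF a] dle[OF b] \<delta>0le(2)[OF a] by auto
      moreover have "x (a + 1) < x a" using gap[OF a] .
      ultimately show ?thesis
        by argo
    qed
    have "\<bar>rev (sorted_list_of_set {r. poly ?P r = 0}) ! (k - 1) - x k\<bar> < d k"
      by (rule roots_from_signs[OF dP Pnz sgn_change dpos sep k])
    then show ?thesis unfolding OP_zero_def d_def by simp
  qed
  define Bz where "Bz = (\<Sum>i=1..N. \<bar>x i\<bar>) + (\<Sum>m\<le>k. \<bar>([]::real list) ! m\<bar>)"
  define eT where "eT = exp (- 2 * T0 * (x k - x (j + 1)))"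
  have eT0: "eT > 0" unfolding eT_def by simp
  have small: "\<bar>OP_zero N x (v t) j k - x k\<bar> \<le> (Bz + \<bar>x k\<bar>) / eT * E k t" if "t \<ge> 0" "t \<le> T0" for t
  proof -
    have "\<bar>OP_zero N x (v t) j k\<bar> \<le> Bz" unfolding Bz_def by (rule OP_zero_bound[where w="v t", OF vpos inj jN])
    then have h: "\<bar>OP_zero N x (v t) j k - x k\<bar> \<le> Bz + \<bar>x k\<bar>" by linarith
    have "x (j + 1) < x k" using xdec[of k "j+1"] k jN by auto
    then have "- 2 * T0 * (x k - x (j + 1)) \<le> - 2 * t * (x k - x (j + 1))" using that by (simp add: mult_right_mono)
    then have "eT \<le> E k t" unfolding eT_def E_def by simp
    then have "1 \<le> E k t / eT" using eT0 by simp
    moreover have "Bz + \<bar>x k\<bar> \<ge> 0" using h by linarith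
    ultimately have "(Bz + \<bar>x k\<bar>) * 1 \<le> (Bz + \<bar>x k\<bar>) * (E k t / eT)" by (intro mult_left_mono) auto
    then show ?thesis using h by simp
  qed
  have Bz0: "Bz + \<bar>x k\<bar> \<ge> 0" unfolding Bz_def by (simp add: sum_nonneg)
  have Ak: "4 * A k / c k \<ge> 0" using A1[OF k] c0[OF k] by simp
  show ?thesis
  proof (intro exI[of _ "4 * A k / c k + (Bz + \<bar>x k\<bar>) / eT"] allI impI)
    fix t :: real assume t0: "t \<ge> 0"
    have Ek: "E k t > 0" unfolding E_def by simp
    have "\<bar>OP_zero N x (v t) j k - x k\<bar> \<le> (4 * A k / c k + (Bz + \<bar>x k\<bar>) / eT) * E k t"
    proof (cases "t \<ge> T0")
      case True
      then have "\<bar>OP_zero N x (v t) j k - x k\<bar> \<le> 4 * A k / c k * E k t" by (rule large)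
      also have "\<dots> \<le> (4 * A k / c k + (Bz + \<bar>x k\<bar>) / eT) * E k t"
        using Ek Bz0 eT0 by (intro mult_right_mono) auto
      finally show ?thesis .
    next
      case False
      then have "\<bar>OP_zero N x (v t) j k - x k\<bar> \<le> (Bz + \<bar>x k\<bar>) / eT * E k t" using small t0 by simp
      also have "\<dots> \<le> (4 * A k / c k + (Bz + \<bar>x k\<bar>) / eT) * E k t"
        using Ek Ak by (intro mult_right_mono) auto
      finally show ?thesis .
    qed
    then show "\<bar>OP_zero N x (tilt_weight N x rho t) j k - x k\<bar>
             \<le> (4 * A k / c k + (Bz + \<bar>x k\<bar>) / eT) * exp (- 2 * t * (x k - x (j + 1)))"
      unfolding OPeq E_def .
  qed
qed


theorem theorem2p5:
  fixes N :: nat and x rho :: "nat \<Rightarrow> real"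
  assumes "N \<ge> 2"
    and "\<And>i j. 1 \<le> i \<Longrightarrow> i < j \<Longrightarrow> j \<le> N \<Longrightarrow> x j < x i"
    and "\<And>i. 1 \<le> i \<Longrightarrow> i \<le> N \<Longrightarrow> rho i > 0"
    and "(\<Sum>i=1..N. rho i) = 1"
  shows "\<forall>j\<in>{1..N-1}. \<forall>k\<in>{1..j}. \<exists>C. \<forall>t\<ge>0.
           \<bar>OP_zero N x (tilt_weight N x rho t) j k - x k\<bar>
             \<le> C * exp (- 2 * t * (x k - x (j + 1)))"
  using main_jk[where x=x and rho=rho, OF assms(1) assms(2) assms(3)] by blast

end
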